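(* Let $h,k\ge 2$ be integers and $w=a^hb^k$. For $n\ge1$ let $S_n = a^h(a^{2h}b^{2k})(aba^{h-1}b^{k-1})^{n}(a^{2h}b^{2k})b^k$. Then every $S_n$ belongs to $L^{\epsilon}_{\vdash_{\{w\}}}$ and for all $1\le i<j$ we have $S_i \not\vdash^*_{\{w\}} S_j$; in particular $\vdash^*_{\{w\}}$ is not a well quasi-order on $L^{\epsilon}_{\vdash_{\{w\}}}$.
   Context: For words $u,v$, the shuffle $u \sqcup\!\sqcup v$ is the set of all words $u_1v_1\cdots u_kv_k$ with $k\ge 1$, $u=u_1\cdots u_k$, $v=v_1\cdots v_k$ (pieces possibly empty). For a finite set $I$ of words, $v \vdash_I w$ means $w \in v \sqcup\!\sqcup u$ for some $u\in I$; $\vdash_I^*$ is its reflexive-transitive closure and $L^{\epsilon}_{\vdash_I}=\{w : \epsilon \vdash_I^* w\}$. A quasi-order $\le$ on $S$ is a well quasi-order iff every infinite sequence $s_1,s_2,\dots$ in $S$ has $i<j$ with $s_i\le s_j$. *)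

theory Defs
  imports Main
begin

datatype letter = a | b

type_synonym word = "letter list"

definition shuffle :: "'x list \<Rightarrow> 'x list \<Rightarrow> 'x list set" where
  "shuffle u v = {concat (map (\<lambda>(p, q). p @ q) (zip us vs)) | us vs.
      length us = length vs \<and> length us \<ge> 1 \<and> concat us = u \<and> concat vs = v}"

definition ins_step :: "'x list set \<Rightarrow> 'x list \<Rightarrow> 'x list \<Rightarrow> bool" where
  "ins_step I v w \<longleftrightarrow> (\<exists>u\<in>I. w \<in> shuffle v u)"

definition ins_steps :: "'x list set \<Rightarrow> 'x list \<Rightarrow> 'x list \<Rightarrow> bool" where
  "ins_steps I = (ins_step I)\<^sup>*\<^sup>*"

definition L_eps :: "'x list set \<Rightarrow> 'x list set" where
  "L_eps I = {w. ins_steps I [] w}"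

definition wqo_on :: "('x \<Rightarrow> 'x \<Rightarrow> bool) \<Rightarrow> 'x set \<Rightarrow> bool" where
  "wqo_on le S \<longleftrightarrow> (\<forall>s::nat \<Rightarrow> 'x. (\<forall>n. s n \<in> S) \<longrightarrow> (\<exists>i j. i < j \<and> le (s i) (s j)))"

definition S_word :: "nat \<Rightarrow> nat \<Rightarrow> nat \<Rightarrow> word" where
  "S_word h k n = replicate h a @ (replicate (2*h) a @ replicate (2*k) b)
     @ concat (replicate n ([a, b] @ replicate (h-1) a @ replicate (k-1) b))
     @ (replicate (2*h) a @ replicate (2*k) b) @ replicate k b"

end

theory Submission
  imports Defs
begin


definition cnt :: "letter \<Rightarrow> word \<Rightarrow> nat" where
  "cnt c xs = length (filter (\<lambda>x. x = c) xs)"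

lemma cnt_Nil[simp]: "cnt c [] = 0" by (simp add: cnt_def)
lemma cnt_Cons[simp]: "cnt c (x # xs) = (if x = c then Suc (cnt c xs) else cnt c xs)"
  by (simp add: cnt_def)
lemma cnt_append[simp]: "cnt c (xs @ ys) = cnt c xs + cnt c ys" by (simp add: cnt_def)
lemma cnt_replicate[simp]: "cnt c (replicate n x) = (if x = c then n else 0)"
  by (simp add: cnt_def filter_replicate)
lemma cnt_concat_replicate[simp]: "cnt c (concat (replicate n xs)) = n * cnt c xs"
  by (induction n) auto

lemma cnt_zero_set: "cnt c xs = 0 \<longleftrightarrow> c \<notin> set xs"
  by (auto simp add: cnt_def filter_empty_conv)

inductive Split :: "'x list \<Rightarrow> 'x list \<Rightarrow> 'x list \<Rightarrow> bool" where
  SNil: "Split [] [] []"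
| SL: "Split X Y D \<Longrightarrow> Split (c # X) (c # Y) D"
| SR: "Split X Y D \<Longrightarrow> Split (c # X) Y (c # D)"

lemma Split_app_L: "Split X Y D \<Longrightarrow> Split (p @ X) (p @ Y) D"
  by (induction p) (auto intro: SL)
lemma Split_app_R: "Split X Y D \<Longrightarrow> Split (p @ X) Y (p @ D)"
  by (induction p) (auto intro: SR)

lemma Split_cnt: "Split X Y D \<Longrightarrow> cnt c X = cnt c Y + cnt c D"
  by (induction rule: Split.induct) auto
lemma Split_len: "Split X Y D \<Longrightarrow> length X = length Y + length D"
  by (induction rule: Split.induct) auto

lemma shuffle_Split_aux:
  "length us = length vs \<Longrightarrow>
   Split (concat (map (\<lambda>(p, q). p @ q) (zip us vs))) (concat us) (concat vs)"
proof (induction us arbitrary: vs)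
  case Nil then show ?case by (simp add: SNil)
next
  case (Cons u us)
  then obtain v vs' where vs: "vs = v # vs'" by (cases vs) auto
  with Cons have "Split (concat (map (\<lambda>(p, q). p @ q) (zip us vs'))) (concat us) (concat vs')" by simp
  then have "Split (u @ v @ concat (map (\<lambda>(p, q). p @ q) (zip us vs'))) (u @ concat us) (v @ concat vs')"
    by (intro Split_app_L Split_app_R)
  then show ?case by (simp add: vs)
qed

lemma shuffle_Split: "z \<in> shuffle v u \<Longrightarrow> Split z v u"
  unfolding shuffle_def using shuffle_Split_aux by blast

lemma Split_ConsE:
  "Split (c # Z) Y D \<Longrightarrow> (\<exists>Y0. Y = c # Y0 \<and> Split Z Y0 D) \<or> (\<exists>D0. D = c # D0 \<and> Split Z Y D0)"
  by (erule Split.cases) auto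

lemma Split_NilE: "Split [] Y D \<Longrightarrow> Y = [] \<and> D = []"
  by (erule Split.cases) auto

lemma Split_assoc:
  "Split Z' Z W \<Longrightarrow> Split Z Y D \<Longrightarrow> \<exists>D'. Split Z' Y D' \<and> Split D' D W"
proof (induction Z' Z W arbitrary: Y D rule: Split.induct)
  case SNil then show ?case using Split_NilE by (auto intro: SNil)
next
  case (SL X Z W c)
  from Split_ConsE[OF SL.prems] show ?case
  proof
    assume "\<exists>Y0. Y = c # Y0 \<and> Split Z Y0 D"
    then obtain Y0 where Y0: "Y = c # Y0" "Split Z Y0 D" by blast
    then obtain D' where "Split X Y0 D'" "Split D' D W" using SL.IH by blast
    then show ?thesis using Y0 by (auto intro: Split.SL)
  next
    assume "\<exists>D0. D = c # D0 \<and> Split Z Y D0"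
    then obtain D0 where D0: "D = c # D0" "Split Z Y D0" by blast
    then obtain D' where "Split X Y D'" "Split D' D0 W" using SL.IH by blast
    then show ?thesis using D0 by (auto intro: Split.SR Split.SL)
  qed
next
  case (SR X Z W c)
  then obtain D' where "Split X Y D'" "Split D' D W" by blast
  then show ?case by (auto intro: Split.SR)
qed

lemma Split_take:
  "Split X Y D \<Longrightarrow> \<exists>i j. \<forall>x. cnt x (take n X) = cnt x (take i Y) + cnt x (take j D)"
proof (induction arbitrary: n rule: Split.induct)
  case SNil then show ?case by auto
next
  case (SL X Y D c)
  show ?case
  proof (cases n)
    case 0 then show ?thesis by (auto intro!: exI[of _ 0])
  next
    case (Suc n')
    then obtain i j where "\<forall>x. cnt x (take n' X) = cnt x (take i Y) + cnt x (take j D)" using SL by blast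
    then show ?thesis using Suc by (intro exI[of _ "Suc i"] exI[of _ j]) auto
  qed
next
  case (SR X Y D c)
  show ?case
  proof (cases n)
    case 0 then show ?thesis by (auto intro!: exI[of _ 0])
  next
    case (Suc n')
    then obtain i j where "\<forall>x. cnt x (take n' X) = cnt x (take i Y) + cnt x (take j D)" using SR by blast
    then show ?thesis using Suc by (intro exI[of _ i] exI[of _ "Suc j"]) auto
  qed
qed

lemma Split_decY:
  "Split X Y D \<Longrightarrow> Y = Y1 @ c # Y2 \<Longrightarrow>
   \<exists>X1 X2 D1 D2. X = X1 @ c # X2 \<and> D = D1 @ D2 \<and> Split X1 Y1 D1 \<and> Split X2 Y2 D2"
proof (induction arbitrary: Y1 rule: Split.induct)
  case SNil then show ?case by simp
next
  case (SL X Y D c0)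
  show ?case
  proof (cases Y1)
    case Nil
    then show ?thesis using SL by (intro exI[of _ "[]"] exI[of _ X] exI[of _ "[]"] exI[of _ D]) (auto intro: SNil)
  next
    case (Cons y Y1')
    then obtain X1 X2 D1 D2 where "X = X1 @ c # X2 \<and> D = D1 @ D2 \<and> Split X1 Y1' D1 \<and> Split X2 Y2 D2"
      using SL by auto
    then show ?thesis using SL Cons by (intro exI[of _ "c0 # X1"] exI[of _ X2] exI[of _ D1] exI[of _ D2]) (auto intro: Split.SL)
  qed
next
  case (SR X Y D c0)
  then obtain X1 X2 D1 D2 where "X = X1 @ c # X2 \<and> D = D1 @ D2 \<and> Split X1 Y1 D1 \<and> Split X2 Y2 D2"
    by auto
  then show ?case by (intro exI[of _ "c0 # X1"] exI[of _ X2] exI[of _ "c0 # D1"] exI[of _ D2]) (auto intro: Split.SR)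
qed

lemma Split_decD:
  "Split X Y D \<Longrightarrow> D = D1 @ c # D2 \<Longrightarrow>
   \<exists>X1 X2 Y1 Y2. X = X1 @ c # X2 \<and> Y = Y1 @ Y2 \<and> Split X1 Y1 D1 \<and> Split X2 Y2 D2"
proof (induction arbitrary: D1 rule: Split.induct)
  case SNil then show ?case by simp
next
  case (SL X Y D c0)
  then obtain X1 X2 Y1 Y2 where "X = X1 @ c # X2 \<and> Y = Y1 @ Y2 \<and> Split X1 Y1 D1 \<and> Split X2 Y2 D2"
    by auto
  then show ?case by (intro exI[of _ "c0 # X1"] exI[of _ X2] exI[of _ "c0 # Y1"] exI[of _ Y2]) (auto intro: Split.SL)
next
  case (SR X Y D c0)
  show ?case
  proof (cases D1)
    case Nil
    then show ?thesis using SR by (intro exI[of _ "[]"] exI[of _ X] exI[of _ "[]"] exI[of _ Y]) (auto intro: SNil)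
  next
    case (Cons y D1')
    then obtain X1 X2 Y1 Y2 where "X = X1 @ c # X2 \<and> Y = Y1 @ Y2 \<and> Split X1 Y1 D1' \<and> Split X2 Y2 D2"
      using SR by auto
    then show ?thesis using SR Cons by (intro exI[of _ "c0 # X1"] exI[of _ X2] exI[of _ Y1] exI[of _ Y2]) (auto intro: Split.SR)
  qed
qed



definition Bal :: "nat \<Rightarrow> nat \<Rightarrow> word \<Rightarrow> bool" where
  "Bal h k D \<longleftrightarrow> (\<forall>n. h * cnt b (take n D) \<le> k * cnt a (take n D)
                    \<and> (0 < cnt b (take n D) \<longrightarrow> h \<le> cnt a (take n D)))"

lemma Bal_Nil: "Bal h k []" by (simp add: Bal_def)

lemma Bal_prefix: "Bal h k (D1 @ D2) \<Longrightarrow>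
   h * cnt b D1 \<le> k * cnt a D1 \<and> (0 < cnt b D1 \<longrightarrow> h \<le> cnt a D1)"
  unfolding Bal_def by (drule spec[of _ "length D1"]) simp

lemma cnt_take_w:
  "cnt a (take n (replicate h a @ replicate k b)) = min n h"
  "cnt b (take n (replicate h a @ replicate k b)) = min (n - h) k"
  by (auto simp: take_append min_def)

lemma Bal_shuffle:
  assumes sp: "Split D' D (replicate h a @ replicate k b)" and bal: "Bal h k D"
  shows "Bal h k D'"
  unfolding Bal_def
proof
  fix n
  obtain i j where ij: "\<forall>x. cnt x (take n D') = cnt x (take i D) + cnt x (take j (replicate h a @ replicate k b))"
    using Split_take[OF sp] by blast
  have bi: "h * cnt b (take i D) \<le> k * cnt a (take i D)" "0 < cnt b (take i D) \<longrightarrow> h \<le> cnt a (take i D)"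
    using bal unfolding Bal_def by auto
  have wj: "h * min (j - h) k \<le> k * min j h" "0 < min (j - h) k \<longrightarrow> h \<le> min j h"
  proof -
    show "h * min (j - h) k \<le> k * min j h"
    proof (cases "j \<le> h")
      case True then show ?thesis by simp
    next
      case False
      then have "min j h = h" by simp
      moreover have "h * min (j - h) k \<le> h * k" by simp
      ultimately show ?thesis by (simp add: mult.commute)
    qed
    show "0 < min (j - h) k \<longrightarrow> h \<le> min j h" by auto
  qed
  show "h * cnt b (take n D') \<le> k * cnt a (take n D') \<and>
        (0 < cnt b (take n D') \<longrightarrow> h \<le> cnt a (take n D'))"
  proof -
    have e1: "cnt b (take n D') = cnt b (take i D) + min (j - h) k"
      using ij cnt_take_w by simp
    have e2: "cnt a (take n D') = cnt a (take i D) + min j h"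
      using ij cnt_take_w by simp
    show ?thesis unfolding e1 e2 using bi wj by (auto simp: add_mult_distrib2)
  qed
qed

lemma steps_split:
  assumes "ins_steps {replicate h a @ replicate k b} Y X"
  shows "\<exists>D m. Split X Y D \<and> Bal h k D \<and> cnt a D = m * h \<and> cnt b D = m * k"
  using assms unfolding ins_steps_def
proof (induction rule: rtranclp_induct)
  case base
  have "Split Y Y []" by (induction Y) (auto intro: SNil SL)
  then show ?case using Bal_Nil by (intro exI[of _ "[]"] exI[of _ 0]) auto
next
  case (step Z Z')
  then obtain D m where D: "Split Z Y D" "Bal h k D" "cnt a D = m * h" "cnt b D = m * k" by blast
  from step(2) have "Split Z' Z (replicate h a @ replicate k b)"
    unfolding ins_step_def using shuffle_Split by blast
  from Split_assoc[OF this D(1)] obtain D' where D': "Split Z' Y D'"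
    "Split D' D (replicate h a @ replicate k b)" by blast
  have "Bal h k D'" using Bal_shuffle[OF D'(2) D(2)] .
  moreover have "cnt a D' = Suc m * h" "cnt b D' = Suc m * k"
    using Split_cnt[OF D'(2)] D by auto
  ultimately show ?case using D' by blast
qed

lemma tri:
  assumes "U @ c # V = U' @ c # V'"
  shows "U = U' \<or> (\<exists>M. U' = U @ c # M) \<or> (\<exists>M. U = U' @ c # M)"
proof -
  from assms obtain us where "U = U' @ us \<and> us @ c # V = c # V' \<or> U @ us = U' \<and> c # V = us @ c # V'"
    unfolding append_eq_append_conv2 by blast
  then show ?thesis by (cases us) auto
qed

lemma uniq_b:
  assumes "U @ c # V = U' @ c # V'" "cnt c U = cnt c U'"
  shows "U = U'"
  using tri[OF assms(1)] assms(2) by auto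

lemma lastb:
  assumes "W1 @ W2 = C @ R" "C \<noteq> []" "last C = c" "cnt c C \<le> cnt c W1"
  shows "\<exists>M. W1 = C @ M"
proof -
  from assms(1) obtain us where "W1 = C @ us \<and> us @ W2 = R \<or> W1 @ us = C \<and> W2 = us @ R"
    unfolding append_eq_append_conv2 by blast
  then show ?thesis
  proof
    assume "W1 = C @ us \<and> us @ W2 = R" then show ?thesis by blast
  next
    assume A: "W1 @ us = C \<and> W2 = us @ R"
    show ?thesis
    proof (cases "us = []")
      case True then show ?thesis using A by auto
    next
      case False
      then have "last us = c" using A assms(3) by auto
      then have "c \<in> set us" using False last_in_set by metis
      then have "cnt c us > 0" using cnt_zero_set by (metis neq0_conv)
      moreover have "cnt c C = cnt c W1 + cnt c us" using A by auto
      ultimately show ?thesis using assms(4) by linarith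
    qed
  qed
qed



definition Pw :: "nat \<Rightarrow> nat \<Rightarrow> word" where
  "Pw h k = [a, b] @ replicate (h-1) a @ replicate (k-1) b"
definition Mw :: "nat \<Rightarrow> nat \<Rightarrow> nat \<Rightarrow> word" where
  "Mw h k n = concat (replicate n (Pw h k))"
definition Vw :: "nat \<Rightarrow> nat \<Rightarrow> nat \<Rightarrow> word" where
  "Vw h k n = replicate (2*k-1) b @ Mw h k n @ replicate (2*h) a @ replicate (3*k) b"

lemma rep_Suc': "0 < n \<Longrightarrow> replicate n x = x # replicate (n - 1) x"
  by (cases n) auto

lemma S_alt:
  assumes "1 \<le> k"
  shows "S_word h k n = replicate (3*h) a @ b # Vw h k n"
proof -
  have r1: "replicate h a @ replicate (2*h) a = replicate (3*h) a"
    by (simp add: replicate_add[symmetric])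
  have r2: "replicate (2*k) b @ replicate k b = replicate (3*k) b"
    by (simp add: replicate_add[symmetric])
  have r3: "replicate (2*k) b = b # replicate (2*k-1) b" using assms by (intro rep_Suc') simp
  show ?thesis
    unfolding S_word_def Vw_def Mw_def Pw_def
    using r1 r2 r3 by (metis append_assoc append_Cons)
qed

lemma cnt_Pw: "1 \<le> h \<Longrightarrow> 1 \<le> k \<Longrightarrow> cnt a (Pw h k) = h \<and> cnt b (Pw h k) = k"
  by (simp add: Pw_def)

lemma cnt_Mw: "1 \<le> h \<Longrightarrow> 1 \<le> k \<Longrightarrow> cnt a (Mw h k n) = n * h \<and> cnt b (Mw h k n) = n * k"
  by (simp add: Mw_def cnt_Pw)

lemma Mw_Suc: "Mw h k (Suc n) = Pw h k @ Mw h k n" by (simp add: Mw_def)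
lemma Mw_add: "Mw h k (m + n) = Mw h k m @ Mw h k n" by (simp add: Mw_def replicate_add)

lemma len_cnt: "length xs = cnt a xs + cnt b xs"
proof (induction xs)
  case (Cons x xs) then show ?case by (cases x) auto
qed simp

lemma nob_rep: "cnt b xs = 0 \<Longrightarrow> xs = replicate (length xs) a"
proof (induction xs)
  case (Cons x xs) then show ?case by (cases x) (auto split: if_splits)
qed simp

lemma PB:
  assumes "us @ t = Mw h k j" "1 \<le> h" "1 \<le> k"
  shows "k * cnt a us \<le> h*k + h * cnt b us"
  using assms(1)
proof (induction j arbitrary: us)
  case 0 then show ?case by (simp add: Mw_def)
next
  case (Suc j)
  then have "us @ t = Pw h k @ Mw h k j" by (simp add: Mw_Suc)
  then obtain zs where "us = Pw h k @ zs \<and> zs @ t = Mw h k j \<or> us @ zs = Pw h k \<and> t = zs @ Mw h k j"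
    unfolding append_eq_append_conv2 by blast
  then show ?case
  proof
    assume A: "us = Pw h k @ zs \<and> zs @ t = Mw h k j"
    then have "k * cnt a zs \<le> h*k + h * cnt b zs" using Suc.IH by blast
    then show ?thesis using A cnt_Pw[OF assms(2,3)] by (simp add: algebra_simps)
  next
    assume A: "us @ zs = Pw h k \<and> t = zs @ Mw h k j"
    then have "cnt a (us @ zs) = h" using cnt_Pw[OF assms(2,3)] by simp
    then have "cnt a us \<le> h" by simp
    then have "k * cnt a us \<le> k * h" by (rule mult_le_mono2)
    moreover have "k * h \<le> h*k + h * cnt b us" by (simp add: mult.commute)
    ultimately show ?thesis by (rule order_trans)
  qed
qed

lemma H3:
  assumes eq: "us @ b # X2 = Mw h k j @ replicate (2*h) a @ replicate (3*k) b"
    and ineq: "2*h*k + h * cnt b us \<le> k * cnt a us" and h1: "1 \<le> h" and k1: "1 \<le> k"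
  shows "X2 = replicate (3*k-1) b"
proof -
  have hk: "0 < h * k" using h1 k1 by simp
  have r3: "replicate (3*k) b = b # replicate (3*k-1) b" using k1 by (intro rep_Suc') simp
  from eq obtain zs where "us = Mw h k j @ zs \<and> zs @ b # X2 = replicate (2*h) a @ replicate (3*k) b
      \<or> us @ zs = Mw h k j \<and> b # X2 = zs @ replicate (2*h) a @ replicate (3*k) b"
    unfolding append_eq_append_conv2 by blast
  then show ?thesis
  proof
    assume A: "us @ zs = Mw h k j \<and> b # X2 = zs @ replicate (2*h) a @ replicate (3*k) b"
    then have "k * cnt a us \<le> h*k + h * cnt b us" using PB h1 k1 by blast
    then show ?thesis using ineq hk by linarith
  next
    assume A: "us = Mw h k j @ zs \<and> zs @ b # X2 = replicate (2*h) a @ replicate (3*k) b"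
    have "2*h*k + h * (j*k + cnt b zs) \<le> k * (j*h + cnt a zs)"
      using ineq A cnt_Mw[OF h1 k1] by simp
    then have ineq2: "2*h*k + h * cnt b zs \<le> k * cnt a zs" by (simp add: algebra_simps)
    from A obtain ys where "zs = replicate (2*h) a @ ys \<and> ys @ b # X2 = replicate (3*k) b
      \<or> zs @ ys = replicate (2*h) a \<and> b # X2 = ys @ replicate (3*k) b"
      unfolding append_eq_append_conv2 by blast
    then show ?thesis
    proof
      assume B: "zs = replicate (2*h) a @ ys \<and> ys @ b # X2 = replicate (3*k) b"
      then have "cnt a (ys @ b # X2) = cnt a (replicate (3*k) b)" by simp
      then have "cnt a ys = 0" by simp
      moreover have "2*h*k + h * cnt b ys \<le> k * (2*h)" using ineq2 B calculation by simp
      then have "h * cnt b ys = 0" by simp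
      then have "cnt b ys = 0" using h1 by simp
      ultimately have "ys = []" using len_cnt[of ys] by simp
      then show ?thesis using B r3 by simp
    next
      assume B: "zs @ ys = replicate (2*h) a \<and> b # X2 = ys @ replicate (3*k) b"
      show ?thesis
      proof (cases ys)
        case Nil then show ?thesis using B r3 by simp
      next
        case (Cons y ys')
        then have "y = b" using B by simp
        then have "cnt b (zs @ ys) > 0" using Cons by simp
        then show ?thesis using B by simp
      qed
    qed
  qed
qed

lemma H2:
  assumes eq: "M @ b # X2 = Vw h k j"
    and ineq: "h + h * cnt b M \<le> k * cnt a M" and h1: "1 \<le> h" and k1: "1 \<le> k"
  shows "X2 = replicate (3*k-1) b"
proof -
  from eq obtain zs where "M = replicate (2*k-1) b @ zs \<and> zs @ b # X2 = Mw h k j @ replicate (2*h) a @ replicate (3*k) b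
      \<or> M @ zs = replicate (2*k-1) b \<and> b # X2 = zs @ Mw h k j @ replicate (2*h) a @ replicate (3*k) b"
    unfolding Vw_def append_eq_append_conv2 by blast
  then show ?thesis
  proof
    assume A: "M @ zs = replicate (2*k-1) b \<and> b # X2 = zs @ Mw h k j @ replicate (2*h) a @ replicate (3*k) b"
    then have "cnt a (M @ zs) = cnt a (replicate (2*k-1) b)" by simp
    then have "cnt a M = 0" by simp
    then show ?thesis using ineq h1 by simp
  next
    assume A: "M = replicate (2*k-1) b @ zs \<and> zs @ b # X2 = Mw h k j @ replicate (2*h) a @ replicate (3*k) b"
    have e: "h + h * (2*k - 1 + cnt b zs) = 2*h*k + h * cnt b zs" using k1
      by (cases k) (auto simp: algebra_simps)
    have "h + h * (2*k - 1 + cnt b zs) \<le> k * cnt a zs" using ineq A by simp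
    then have "2*h*k + h * cnt b zs \<le> k * cnt a zs" using e by simp
    then show ?thesis using H3 A h1 k1 by blast
  qed
qed

lemma H:
  assumes eq: "replicate (3*h) a @ b # Vw h k j = X1 @ b # X2"
    and ineq: "h * cnt b X1 + 3*h*k \<le> k * cnt a X1" and h1: "1 \<le> h" and k1: "1 \<le> k"
  shows "X1 = replicate (3*h) a \<or> X2 = replicate (3*k-1) b"
proof -
  from tri[OF eq] consider "replicate (3*h) a = X1" | M where "X1 = replicate (3*h) a @ b # M"
    | M where "replicate (3*h) a = X1 @ b # M" by blast
  then show ?thesis
  proof cases
    case 1 then show ?thesis by simp
  next
    case (2 M)
    then have V: "M @ b # X2 = Vw h k j" using eq by simp
    have "h * (Suc (cnt b M)) + 3*h*k \<le> k * (3*h + cnt a M)" using ineq 2 by simp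
    then have "h + h * cnt b M \<le> k * cnt a M" by (simp add: algebra_simps)
    then show ?thesis using H2[OF V _ h1 k1] by blast
  next
    case (3 M)
    then have "cnt b (replicate (3*h) a) = cnt b (X1 @ b # M)" by simp
    then show ?thesis by simp
  qed
qed

definition NA :: "nat \<Rightarrow> word \<Rightarrow> bool" where
  "NA h xs \<longleftrightarrow> \<not> (\<exists>U V. xs = U @ replicate h a @ V)"

lemma NA_cnt: "cnt a xs < h \<Longrightarrow> NA h xs"
  unfolding NA_def by auto

lemma NA_append:
  assumes "NA h xs" "NA h ys" "xs \<noteq> []" "last xs = b"
  shows "NA h (xs @ ys)"
  unfolding NA_def
proof
  assume "\<exists>U V. xs @ ys = U @ replicate h a @ V"
  then obtain U V where e: "xs @ ys = U @ (replicate h a @ V)" by auto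
  then obtain us where "xs = U @ us \<and> us @ ys = replicate h a @ V \<or> xs @ us = U \<and> ys = us @ replicate h a @ V"
    unfolding append_eq_append_conv2 by blast
  then show False
  proof
    assume "xs @ us = U \<and> ys = us @ replicate h a @ V"
    then show False using assms(2) unfolding NA_def by blast
  next
    assume A: "xs = U @ us \<and> us @ ys = replicate h a @ V"
    then obtain vs where "us = replicate h a @ vs \<and> vs @ ys = V \<or> us @ vs = replicate h a \<and> ys = vs @ V"
      unfolding append_eq_append_conv2 by blast
    then show False
    proof
      assume "us = replicate h a @ vs \<and> vs @ ys = V"
      then show False using A assms(1) unfolding NA_def by auto
    next
      assume B: "us @ vs = replicate h a \<and> ys = vs @ V"
      show False
      proof (cases "us = []")
        case True
        then show False using B assms(2) unfolding NA_def by (metis append_Nil)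
      next
        case False
        then have "last us \<in> set (us @ vs)" by simp
        then have "last us \<in> set (replicate h a)" using B by simp
        then have "last us = a" by simp
        moreover have "last xs = last us" using A False by simp
        ultimately show False using assms(4) by simp
      qed
    qed
  qed
qed



lemma Pw_last: "2 \<le> k \<Longrightarrow> last (Pw h k) = b \<and> Pw h k \<noteq> []"
  by (simp add: Pw_def)

lemma NA_Pw: assumes "2 \<le> h" "2 \<le> k" shows "NA h (Pw h k)"
proof -
  have "NA h [a, b]" using assms by (intro NA_cnt) simp
  moreover have "NA h (replicate (h-1) a @ replicate (k-1) b)" using assms by (intro NA_cnt) simp
  ultimately show ?thesis unfolding Pw_def using NA_append[of h "[a,b]"] by simp
qed

lemma NA_Mw: assumes "2 \<le> h" "2 \<le> k" shows "NA h (Mw h k n)"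
proof (induction n)
  case 0 then show ?case using assms by (intro NA_cnt) (simp add: Mw_def)
next
  case (Suc n)
  then show ?case unfolding Mw_Suc using NA_append[OF NA_Pw[OF assms]] Pw_last[OF assms(2)] by blast
qed

lemma NA_C0: assumes "2 \<le> h" "2 \<le> k" shows "NA h (replicate (2*k-1) b @ Mw h k n)"
proof -
  have "NA h (replicate (2*k-1) b)" using assms by (intro NA_cnt) simp
  moreover have "replicate (2*k-1) b \<noteq> []" "last (replicate (2*k-1) b) = b" using assms by auto
  ultimately show ?thesis using NA_append NA_Mw[OF assms] by blast
qed

lemma last_Mw: assumes "2 \<le> k" shows "Mw h k n \<noteq> [] \<longrightarrow> last (Mw h k n) = b"
proof (induction n)
  case 0 then show ?case by (simp add: Mw_def)
next
  case (Suc n)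
  then show ?case using Pw_last[OF assms, of h] by (auto simp add: Mw_Suc last_append)
qed

lemma last_C0: assumes "2 \<le> k"
  shows "replicate (2*k-1) b @ Mw h k n \<noteq> [] \<and> last (replicate (2*k-1) b @ Mw h k n) = b"
  using last_Mw[OF assms, of h n] assms by (auto simp add: last_append)

lemma core:
  assumes h2: "2 \<le> h" and k2: "2 \<le> k" and ij: "i < j"
    and eqX: "Vw h k j = Z1 @ b # Z2" and eqY: "Vw h k i = W1 @ W2"
    and sp: "Split Z1 W1 Da" and Da: "Da = replicate d a" and hd: "h \<le> d"
  shows False
proof -
  have h1: "1 \<le> h" and k1: "1 \<le> k" using h2 k2 by auto
  define C0 where "C0 = replicate (2*k-1) b @ Mw h k i"
  define Xr where "Xr = replicate (h-1) a @ replicate (k-1) b @ Mw h k (j-i-1) @ replicate (2*h) a @ replicate (3*k) b"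
  have "Mw h k j = Mw h k i @ Mw h k (Suc (j-i-1))"
    using ij Mw_add[of h k i "Suc (j-i-1)"] by simp
  then have VX: "Vw h k j = (C0 @ [a]) @ b # Xr"
    unfolding Vw_def C0_def Xr_def by (simp add: Mw_Suc Pw_def)
  have r3: "replicate (3*k) b = b # replicate (3*k-1) b" using k1 by (intro rep_Suc') simp
  have VY: "Vw h k i = (C0 @ replicate (2*h) a @ [b]) @ replicate (3*k-1) b"
    unfolding Vw_def C0_def using r3 by simp
  have cC0: "cnt b C0 = 2*k-1 + i*k" "cnt a C0 = i*h"
    unfolding C0_def using cnt_Mw[OF h1 k1] by auto
  have lC0: "C0 \<noteq> []" "last C0 = b" using last_C0[OF k2] unfolding C0_def by auto
  have NC0: "NA h C0" unfolding C0_def using NA_C0[OF h2 k2] .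
  have cZ: "cnt b Z1 = cnt b W1" "cnt a Z1 = cnt a W1 + d"
    using Split_cnt[OF sp, of b] Split_cnt[OF sp, of a] Da by auto
  have eq: "Z1 @ b # Z2 = (C0 @ [a]) @ b # Xr" using eqX VX by simp
  from tri[OF eq] consider "Z1 = C0 @ [a]" | M where "C0 @ [a] = Z1 @ b # M"
    | M where "Z1 = (C0 @ [a]) @ b # M" by blast
  then show False
  proof cases
    case 1
    then have "cnt b C0 \<le> cnt b W1" using cZ by simp
    moreover have "W1 @ W2 = C0 @ (replicate (2*h) a @ b # replicate (3*k-1) b)" using eqY VY by simp
    ultimately obtain M where "W1 = C0 @ M" using lastb lC0 by blast
    then have "cnt a W1 \<ge> i*h" using cC0 by simp
    moreover have "cnt a Z1 = i*h + 1" using 1 cC0 by simp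
    ultimately show False using cZ hd h2 by linarith
  next
    case (2 M)
    have "M \<noteq> []" using 2 by auto
    then have "M = butlast M @ [last M]" by simp
    then have "C0 @ [a] = (Z1 @ b # butlast M) @ [last M]" using 2 by (metis append_Cons append_assoc)
    then have C0eq: "C0 = Z1 @ b # butlast M" by simp
    have "W1 @ W2 = Z1 @ (b # butlast M @ replicate (2*h) a @ b # replicate (3*k-1) b)"
      using eqY VY C0eq by simp
    then obtain us where "W1 = Z1 @ us \<and> us @ W2 = b # butlast M @ replicate (2*h) a @ b # replicate (3*k-1) b
       \<or> W1 @ us = Z1 \<and> W2 = us @ b # butlast M @ replicate (2*h) a @ b # replicate (3*k-1) b"
      unfolding append_eq_append_conv2 by blast
    then show False
    proof
      assume "W1 = Z1 @ us \<and> us @ W2 = b # butlast M @ replicate (2*h) a @ b # replicate (3*k-1) b"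
      then have "cnt a W1 \<ge> cnt a Z1" by simp
      then show False using cZ hd h2 by linarith
    next
      assume A: "W1 @ us = Z1 \<and> W2 = us @ b # butlast M @ replicate (2*h) a @ b # replicate (3*k-1) b"
      then have "cnt b us = 0" "cnt a us = d" using cZ by auto
      then have "us = replicate d a" using nob_rep[of us] len_cnt[of us] by simp
      also have "\<dots> = replicate h a @ replicate (d - h) a" using hd by (simp add: replicate_add[symmetric])
      finally have "C0 = W1 @ replicate h a @ (replicate (d - h) a @ b # butlast M)"
        using A C0eq by simp
      then show False using NC0 unfolding NA_def by blast
    qed
  next
    case (3 M)
    have "cnt b (C0 @ replicate (2*h) a @ [b]) \<le> cnt b W1" using 3 cZ by simp
    moreover have "W1 @ W2 = (C0 @ replicate (2*h) a @ [b]) @ replicate (3*k-1) b" using eqY VY by simp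
    moreover have "C0 @ replicate (2*h) a @ [b] \<noteq> []" "last (C0 @ replicate (2*h) a @ [b]) = b" by auto
    ultimately obtain M' where "W1 = (C0 @ replicate (2*h) a @ [b]) @ M'" using lastb by blast
    then have "W1 = (C0 @ replicate (2*h) a) @ b # M'" by simp
    from Split_decY[OF sp this] obtain Q1 Q2 D1 D2 where Q: "Z1 = Q1 @ b # Q2" "Da = D1 @ D2"
      "Split Q1 (C0 @ replicate (2*h) a) D1" by blast
    have "cnt b Da = 0" using Da by simp
    then have "cnt b D1 = 0" using Q(2) by simp
    then have cQ: "cnt b Q1 = cnt b C0" "cnt a Q1 \<ge> i*h + 2*h"
      using Split_cnt[OF Q(3), of b] Split_cnt[OF Q(3), of a] cC0 by auto
    have "Q1 @ b # (Q2 @ b # Z2) = (C0 @ [a]) @ b # Xr" using eq Q(1) by simp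
    moreover have "cnt b Q1 = cnt b (C0 @ [a])" using cQ by simp
    ultimately have "Q1 = C0 @ [a]" by (rule uniq_b)
    then have "cnt a Q1 = i*h + 1" using cC0 by simp
    then show False using cQ h2 by linarith
  qed
qed



lemma cnt_Vw: "1 \<le> h \<Longrightarrow> 1 \<le> k \<Longrightarrow>
  cnt a (Vw h k n) = n*h + 2*h \<and> cnt b (Vw h k n) = 2*k-1 + n*k + 3*k"
  unfolding Vw_def using cnt_Mw[of h k n] by simp

lemma not_steps:
  assumes h2: "2 \<le> h" and k2: "2 \<le> k" and ij: "i < j"
    and st: "ins_steps {replicate h a @ replicate k b} (S_word h k i) (S_word h k j)"
  shows False
proof -
  have h1: "1 \<le> h" and k1: "1 \<le> k" using h2 k2 by auto
  obtain D m where sp: "Split (S_word h k j) (S_word h k i) D" and bal: "Bal h k D"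
    and ca: "cnt a D = m * h" and cb: "cnt b D = m * k"
    using steps_split[OF st] by blast
  have SX: "S_word h k j = replicate (3*h) a @ b # Vw h k j" using S_alt[OF k1] .
  have SY: "S_word h k i = replicate (3*h) a @ b # Vw h k i" using S_alt[OF k1] .
  have "cnt a (S_word h k j) = cnt a (S_word h k i) + cnt a D" using Split_cnt[OF sp] .
  then have "j*h = i*h + m*h" using SX SY ca cnt_Vw[OF h1 k1, of i] cnt_Vw[OF h1 k1, of j] by simp
  then have "j*h = (i+m)*h" by (simp add: algebra_simps)
  then have "j = i + m" using h1 by simp
  then have "0 < m" using ij by simp
  then have cbpos: "0 < cnt b D" using cb k1 by simp
  have sp1: "Split (S_word h k j) (replicate (3*h) a @ b # Vw h k i) D" using sp SY by simp
  from Split_decY[OF sp1 refl] obtain X1 X2 D1 D2 where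
    dec: "S_word h k j = X1 @ b # X2" "D = D1 @ D2" "Split X1 (replicate (3*h) a) D1" "Split X2 (Vw h k i) D2"
    by blast
  have bD1: "h * cnt b D1 \<le> k * cnt a D1" using Bal_prefix[of h k D1 D2] bal dec(2) by simp
  have cX1: "cnt a X1 = 3*h + cnt a D1" "cnt b X1 = cnt b D1"
    using Split_cnt[OF dec(3), of a] Split_cnt[OF dec(3), of b] by auto
  have "h * cnt b X1 + 3*h*k \<le> k * cnt a X1"
    using bD1 cX1 by (simp add: algebra_simps)
  moreover have eqX: "replicate (3*h) a @ b # Vw h k j = X1 @ b # X2" using dec(1) SX by simp
  ultimately have "X1 = replicate (3*h) a \<or> X2 = replicate (3*k-1) b" using H h1 k1 by blast
  then show False
  proof
    assume "X2 = replicate (3*k-1) b"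
    then have "cnt b X2 = 3*k-1" by simp
    moreover have "cnt b X2 = cnt b (Vw h k i) + cnt b D2" using Split_cnt[OF dec(4)] .
    ultimately show False using cnt_Vw[OF h1 k1, of i] k2 by simp
  next
    assume X1: "X1 = replicate (3*h) a"
    have "length X1 = 3*h + length D1" using Split_len[OF dec(3)] by simp
    then have "D1 = []" using X1 by simp
    then have DD: "D2 = D" using dec(2) by simp
    have "X2 = Vw h k j" using eqX X1 by simp
    then have spV: "Split (Vw h k j) (Vw h k i) D" using dec(4) DD by simp
    have "b \<in> set D" using cbpos cnt_zero_set by (metis neq0_conv)
    then obtain Da Db where DaDb: "D = Da @ b # Db" "b \<notin> set Da" by (meson split_list_first)
    have cDa: "cnt b Da = 0" using DaDb(2) cnt_zero_set by blast
    then have DaR: "Da = replicate (length Da) a" by (rule nob_rep)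
    have "D = (Da @ [b]) @ Db" using DaDb(1) by simp
    then have "0 < cnt b (Da @ [b]) \<longrightarrow> h \<le> cnt a (Da @ [b])" using Bal_prefix bal by metis
    then have "h \<le> cnt a Da" by simp
    then have hDa: "h \<le> length Da" using len_cnt[of Da] cDa by simp
    from Split_decD[OF spV DaDb(1)] obtain Z1 Z2 W1 W2 where
      Z: "Vw h k j = Z1 @ b # Z2" "Vw h k i = W1 @ W2" "Split Z1 W1 Da" by blast
    show False using core[OF h2 k2 ij Z(1) Z(2) Z(3) DaR hDa] .
  qed
qed

lemma ins_mid: "ins_step {u} (x @ y) (x @ u @ y)"
proof -
  have "x @ u @ y \<in> shuffle (x @ y) u"
    unfolding shuffle_def
    by (rule CollectI, rule exI[of _ "[x, y]"], rule exI[of _ "[u, []]"]) simp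
  then show ?thesis unfolding ins_step_def by blast
qed

lemma ins_P:
  assumes h1: "1 \<le> h" and k1: "1 \<le> k"
  shows "ins_step {replicate h a @ replicate k b} (replicate h a @ X) (replicate h a @ Pw h k @ X)"
proof -
  have ra: "replicate h a = a # replicate (h-1) a" using h1 by (intro rep_Suc') simp
  have rb: "replicate k b = b # replicate (k-1) b" using k1 by (intro rep_Suc') simp
  have "replicate h a @ Pw h k @ X \<in> shuffle (replicate h a @ X) (replicate h a @ replicate k b)"
    unfolding shuffle_def
    apply (rule CollectI, rule exI[of _ "[[], [a], replicate (h-1) a, X]"],
        rule exI[of _ "[replicate h a, [b], replicate (k-1) b, []]"])
    using ra rb by (simp add: Pw_def)
  then show ?thesis unfolding ins_step_def by blast
qed

lemma part1:
  assumes h1: "1 \<le> h" and k1: "1 \<le> k"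
  shows "S_word h k n \<in> L_eps {replicate h a @ replicate k b}"
proof -
  define A where "A = replicate h a"
  define B where "B = replicate k b"
  define R where "R = A @ A @ B @ B @ B"
  let ?I = "{A @ B}"
  have st: "ins_step ?I x y \<Longrightarrow> ins_steps ?I x y" for x y
    unfolding ins_steps_def by blast
  have tr: "ins_steps ?I x y \<Longrightarrow> ins_steps ?I y z \<Longrightarrow> ins_steps ?I x z" for x y z
    unfolding ins_steps_def by (rule rtranclp_trans)
  have s1: "ins_steps ?I [] (A @ B)" using st ins_mid[of "A @ B" "[]" "[]"] by simp
  have s2: "ins_steps ?I (A @ B) (A @ (A @ B) @ B)" using st ins_mid by blast
  have s3: "ins_steps ?I ((A @ A) @ (B @ B)) ((A @ A) @ (A @ B) @ (B @ B))" using st ins_mid by blast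
  have s3': "ins_steps ?I (A @ (A @ B) @ B) (A @ Mw h k 0 @ R)"
    using s3 by (simp add: R_def Mw_def)
  have "ins_steps ?I [] (A @ Mw h k 0 @ R)"
    using tr[OF s1 tr[OF s2 s3']] .
  moreover have "ins_steps ?I (A @ Mw h k m @ R) (A @ Mw h k (Suc m) @ R)" for m
    using st ins_P[OF h1 k1, of "Mw h k m @ R"] by (simp add: A_def B_def Mw_Suc)
  ultimately have "ins_steps ?I [] (A @ Mw h k n @ R)"
    by (induction n) (auto intro: tr)
  moreover have "ins_steps ?I (A @ (Mw h k n @ R)) (A @ (A @ B) @ (Mw h k n @ R))" using st ins_mid by blast
  moreover have "ins_steps ?I ((A @ A) @ (B @ Mw h k n @ R)) ((A @ A) @ (A @ B) @ (B @ Mw h k n @ R))"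
    using st ins_mid by blast
  ultimately have "ins_steps ?I [] (A @ A @ A @ B @ B @ Mw h k n @ R)"
    by (auto intro: tr)
  moreover have "S_word h k n = A @ A @ A @ B @ B @ Mw h k n @ R"
  proof -
    have "replicate (2*h) a = A @ A" unfolding A_def by (simp add: replicate_add[symmetric] mult_2)
    moreover have "replicate (2*k) b = B @ B" unfolding B_def by (simp add: replicate_add[symmetric] mult_2)
    ultimately show ?thesis unfolding S_word_def R_def Mw_def Pw_def by (simp add: A_def B_def)
  qed
  ultimately show ?thesis unfolding L_eps_def A_def B_def by simp
qed

theorem proposition1:
  fixes h k :: nat
  assumes "h \<ge> 2" and "k \<ge> 2"
  defines "w \<equiv> replicate h a @ replicate k b"
  shows "(\<forall>n\<ge>1. S_word h k n \<in> L_eps {w})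
    \<and> (\<forall>i j. 1 \<le> i \<and> i < j \<longrightarrow> \<not> ins_steps {w} (S_word h k i) (S_word h k j))
    \<and> \<not> wqo_on (ins_steps {w}) (L_eps {w})"
proof (intro conjI)
  have h1: "1 \<le> h" and k1: "1 \<le> k" using assms by auto
  show P1: "\<forall>n\<ge>1. S_word h k n \<in> L_eps {w}" using part1[OF h1 k1] unfolding w_def by blast
  show P2: "\<forall>i j. 1 \<le> i \<and> i < j \<longrightarrow> \<not> ins_steps {w} (S_word h k i) (S_word h k j)"
    using not_steps[OF assms(1,2)] unfolding w_def by blast
  show "\<not> wqo_on (ins_steps {w}) (L_eps {w})"
    unfolding wqo_on_def
  proof
    assume H: "\<forall>s::nat \<Rightarrow> word. (\<forall>n. s n \<in> L_eps {w}) \<longrightarrow> (\<exists>i j. i < j \<and> ins_steps {w} (s i) (s j))"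
    have "\<forall>n. S_word h k (Suc n) \<in> L_eps {w}" using P1 by simp
    then obtain i j where "i < j" "ins_steps {w} (S_word h k (Suc i)) (S_word h k (Suc j))"
      using H[rule_format, of "\<lambda>n. S_word h k (Suc n)"] by blast
    then show False using P2 by auto
  qed
qed


end
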